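(* In the setting of the context, let $L=\bigoplus_{i=0}^{r+1}\mathbb ZE_i$, let $L^*=\mathrm{Hom}_{\mathbb Z}(L,\mathbb Z)$ with dual basis $E_0^*,\dots,E_{r+1}^*$, for $i=1,\dots,r$ let $E_i^\vee\in L^*$ be the functional $C\mapsto E_i\cdot C$, and let $\mathbb E\le L^*$ be the subgroup generated by $E_1^\vee,\dots,E_r^\vee$. Then the homomorphism $\nu\colon L^*\to\mathbb Z^2$ defined by $E_i^*\mapsto\nu_i$ $(0\le i\le r+1)$ is surjective with kernel $\mathbb E$.
   Context: $R$ is a two-dimensional normal noetherian excellent Hensel local domain with residue field $\kappa$, having a rational minimal resolution $f\colon Y\to\operatorname{Spec}R$ whose exceptional locus is a chain $E_1,\dots,E_r$ of curves $E_i\simeq\mathbb P^1_\kappa$, with $E_i\cap E_{i+1}$ a single $\kappa$-rational point and no other intersections. $E_0,E_{r+1}\subset Y$ are irreducible non-exceptional curves with $E_0\cdot E_1=1$, $E_0\cdot E_j=0$ for $2\le j\le r$, $E_{r+1}\cdot E_r=1$, $E_{r+1}\cdot E_j=0$ for $1\le j\le r-1$. Put $m_i=-E_i^2$, $\nu_0=(0,1)$, $\nu_1=(1,0)$, $\nu_{i+1}=m_i\nu_i-\nu_{i-1}$ for $i=1,\dots,r$. *)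

theory Defs
  imports Main
begin

fun nu :: "(nat \<Rightarrow> int) \<Rightarrow> nat \<Rightarrow> int \<times> int" where
  "nu m 0 = (0, 1)"
| "nu m (Suc 0) = (1, 0)"
| "nu m (Suc (Suc i)) =
     (m (Suc i) * fst (nu m (Suc i)) - fst (nu m i),
      m (Suc i) * snd (nu m (Suc i)) - snd (nu m i))"

text \<open>L = free abelian group on E_0..E_(r+1); L* = Hom(L,Z) is represented by
  the coordinate function k \<mapsto> phi(E_k), i.e. phi = sum_k phi(E_k) E_k^*,
  with phi k = 0 for k > r+1.\<close>
definition Ldual :: "nat \<Rightarrow> (nat \<Rightarrow> int) set" where
  "Ldual r = {phi. \<forall>k>r+1. phi k = 0}"

text \<open>E_i^vee : C \<mapsto> E_i . C, with intersection numbers IP i k = E_i . E_k.\<close>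
definition Evee :: "(nat \<Rightarrow> nat \<Rightarrow> int) \<Rightarrow> nat \<Rightarrow> nat \<Rightarrow> nat \<Rightarrow> int" where
  "Evee IP r i = (\<lambda>k. if k \<le> r + 1 then IP i k else 0)"

definition Egrp :: "(nat \<Rightarrow> nat \<Rightarrow> int) \<Rightarrow> nat \<Rightarrow> (nat \<Rightarrow> int) set" where
  "Egrp IP r = {phi. \<exists>c :: nat \<Rightarrow> int. phi = (\<lambda>k. \<Sum>i=1..r. c i * Evee IP r i k)}"

definition numap :: "(nat \<Rightarrow> int) \<Rightarrow> nat \<Rightarrow> (nat \<Rightarrow> int) \<Rightarrow> int \<times> int" where
  "numap m r phi = ((\<Sum>k=0..r+1. phi k * fst (nu m k)), (\<Sum>k=0..r+1. phi k * snd (nu m k)))"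

end

theory Submission
  imports Defs
begin

lemma swap_lemma:
  fixes c :: "nat \<Rightarrow> int"
  shows "(\<Sum>k\<in>K. (\<Sum>i\<in>I. c i * e i k) * g k) = (\<Sum>i\<in>I. c i * (\<Sum>k\<in>K. e i k * g k))"
  by (simp add: sum_distrib_left sum_distrib_right mult.assoc sum.swap[of _ I K])

lemma supp01:
  fixes psi g :: "nat \<Rightarrow> int"
  assumes "\<And>k. 2 \<le> k \<Longrightarrow> psi k = 0"
  shows "(\<Sum>k=0..r+1. psi k * g k) = psi 0 * g 0 + psi 1 * g 1"
proof -
  have "(\<Sum>k=0..r+1. psi k * g k) = (\<Sum>k\<in>{0,1}. psi k * g k)"
    by (rule sum.mono_neutral_right) (use assms in auto)
  thus ?thesis by simp
qed

lemma numap01: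
  assumes "\<And>k. 2 \<le> k \<Longrightarrow> psi k = 0"
  shows "numap m r psi = (psi 1, psi 0)"
proof -
  have "(\<Sum>k=0..r+1. psi k * fst (nu m k)) = psi 1"
    using supp01[OF assms, where r=r and g="\<lambda>k. fst (nu m k)"] by simp
  moreover have "(\<Sum>k=0..r+1. psi k * snd (nu m k)) = psi 0"
    using supp01[OF assms, where r=r and g="\<lambda>k. snd (nu m k)"] by simp
  ultimately show ?thesis unfolding numap_def by simp
qed

theorem proposition4p4:
  fixes r :: nat and IP :: "nat \<Rightarrow> nat \<Rightarrow> int" and m :: "nat \<Rightarrow> int"
  assumes r: "r \<ge> 1"
    and sym: "\<And>i j. i \<le> r + 1 \<Longrightarrow> j \<le> r + 1 \<Longrightarrow> IP i j = IP j i"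
    and self: "\<And>i. 1 \<le> i \<Longrightarrow> i \<le> r \<Longrightarrow> IP i i = - m i"
    and adj: "\<And>i. 1 \<le> i \<Longrightarrow> i < r \<Longrightarrow> IP i (i + 1) = 1"
    and far: "\<And>i j. 1 \<le> i \<Longrightarrow> i \<le> r \<Longrightarrow> 1 \<le> j \<Longrightarrow> j \<le> r \<Longrightarrow> i + 1 < j \<Longrightarrow> IP i j = 0"
    and E0a: "IP 0 1 = 1"
    and E0b: "\<And>j. 2 \<le> j \<Longrightarrow> j \<le> r \<Longrightarrow> IP 0 j = 0"
    and Era: "IP (r + 1) r = 1"
    and Erb: "\<And>j. 1 \<le> j \<Longrightarrow> j \<le> r - 1 \<Longrightarrow> IP (r + 1) j = 0"
  shows "numap m r ` Ldual r = UNIV \<and> {phi \<in> Ldual r. numap m r phi = (0, 0)} = Egrp IP r"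
proof -
  have IPv: "IP i k = (if k + 1 = i then 1 else 0) + (if k = i + 1 then 1 else 0) + (if k = i then - m i else 0)"
    if i: "1 \<le> i" "i \<le> r" and k: "k \<le> r + 1" for i k
  proof -
    consider "k + 1 = i" | "k = i + 1" | "k = i" | "k + 1 < i" | "i + 1 < k" by linarith
    then show ?thesis
    proof cases
      case 1
      have "IP i k = IP k i" using sym i k by simp
      also have "\<dots> = 1"
      proof (cases "k = 0")
        case True thus ?thesis using 1 E0a by simp
      next
        case False thus ?thesis using 1 adj[of k] i by simp
      qed
      finally show ?thesis using 1 by simp
    next
      case 2
      have "IP i k = 1"
      proof (cases "i < r")
        case True thus ?thesis using 2 adj i by simp
      next
        case False
        hence "i = r" using i by simp
        thus ?thesis using 2 sym[of r "r+1"] Era by simp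
      qed
      thus ?thesis using 2 by simp
    next
      case 3 thus ?thesis using self i by simp
    next
      case 4
      have "IP i k = IP k i" using sym i k by simp
      also have "\<dots> = 0"
      proof (cases "k = 0")
        case True thus ?thesis using 4 E0b i by simp
      next
        case False thus ?thesis using 4 far[of k i] i by simp
      qed
      finally show ?thesis using 4 by simp
    next
      case 5
      have "IP i k = 0"
      proof (cases "k = r + 1")
        case True
        hence "IP i k = IP k i" using sym i k by simp
        thus ?thesis using True Erb[of i] 5 i by simp
      next
        case False thus ?thesis using far[of i k] 5 i k by simp
      qed
      thus ?thesis using 5 by simp
    qed
  qed
  have Ev: "Evee IP r i k = (if k + 1 = i then 1 else 0) + (if k = i + 1 then 1 else 0) + (if k = i then - m i else 0)"
    if i: "1 \<le> i" "i \<le> r" for i k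
    using IPv[OF i] i unfolding Evee_def by auto
  have EvL: "Evee IP r i k = 0" if "k > r + 1" for i k
    using that unfolding Evee_def by simp
  have sumEv: "(\<Sum>k=0..r+1. Evee IP r i k * g k) = g (i - 1) + g (i + 1) - m i * g i"
    if i: "1 \<le> i" "i \<le> r" for i and g :: "nat \<Rightarrow> int"
  proof -
    have "(\<Sum>k=0..r+1. Evee IP r i k * g k) =
      (\<Sum>k=0..r+1. (if k = i - 1 then g k else 0) + (if k = i + 1 then g k else 0) - (if k = i then m i * g k else 0))"
      by (rule sum.cong) (use Ev[OF i] i in auto)
    also have "\<dots> = g (i - 1) + g (i + 1) - m i * g i"
      using i by (simp add: sum.distrib sum_subtractf sum.delta' le_diff_conv; linarith)
    finally show ?thesis .
  qed
  have nurec: "nu m (i + 1) = (m i * fst (nu m i) - fst (nu m (i - 1)), m i * snd (nu m i) - snd (nu m (i - 1)))"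
    if "1 \<le> i" for i
    using that by (cases i) auto
  have numEv: "numap m r (Evee IP r i) = (0, 0)" if i: "1 \<le> i" "i \<le> r" for i
    unfolding numap_def using sumEv[OF i, of "\<lambda>k. fst (nu m k)"] sumEv[OF i, of "\<lambda>k. snd (nu m k)"]
      nurec[OF i(1)] by simp
  have surj: "numap m r ` Ldual r = UNIV"
  proof (intro set_eqI iffI)
    fix x :: "int \<times> int"
    obtain a b where x: "x = (a, b)" by force
    define phi where "phi = (\<lambda>k::nat. if k = 0 then b else if k = 1 then a else 0)"
    have "phi \<in> Ldual r" unfolding phi_def Ldual_def by auto
    moreover have "numap m r phi = x"
      by (subst numap01) (auto simp: phi_def x)
    ultimately show "x \<in> numap m r ` Ldual r" by blast
  qed auto
  have sub1: "Egrp IP r \<subseteq> {phi \<in> Ldual r. numap m r phi = (0, 0)}"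
  proof
    fix phi assume "phi \<in> Egrp IP r"
    then obtain c where c: "phi = (\<lambda>k. \<Sum>i=1..r. c i * Evee IP r i k)" unfolding Egrp_def by blast
    have "phi \<in> Ldual r" unfolding Ldual_def c using EvL by simp
    moreover have "numap m r phi = (0, 0)"
    proof -
      have z: "(\<Sum>k=0..r+1. phi k * g (nu m k)) = 0" if g: "\<And>i. 1 \<le> i \<Longrightarrow> i \<le> r \<Longrightarrow> (\<Sum>k=0..r+1. Evee IP r i k * g (nu m k)) = 0" for g
        unfolding c swap_lemma using g by (simp add: sum.neutral)
      have "(\<Sum>k=0..r+1. phi k * fst (nu m k)) = 0"
        by (rule z) (use numEv in \<open>auto simp: numap_def\<close>)
      moreover have "(\<Sum>k=0..r+1. phi k * snd (nu m k)) = 0"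
        by (rule z) (use numEv in \<open>auto simp: numap_def\<close>)
      ultimately show ?thesis unfolding numap_def by simp
    qed
    ultimately show "phi \<in> {phi \<in> Ldual r. numap m r phi = (0, 0)}" by blast
  qed
  have red: "\<forall>phi. phi \<in> Ldual r \<longrightarrow> (\<forall>k>n+1. phi k = 0) \<longrightarrow>
      (\<exists>c. \<forall>k. 2 \<le> k \<longrightarrow> phi k = (\<Sum>i=1..r. c i * Evee IP r i k))" if "n \<le> r" for n
    using that
  proof (induction n)
    case 0
    show ?case
    proof (intro allI impI)
      fix phi :: "nat \<Rightarrow> int" assume "\<forall>k>0+1. phi k = 0"
      thus "\<exists>c. \<forall>k. 2 \<le> k \<longrightarrow> phi k = (\<Sum>i=1..r. c i * Evee IP r i k)"
        by (intro exI[of _ "\<lambda>_. 0"]) auto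
    qed
  next
    case (Suc n)
    show ?case
    proof (intro allI impI)
      fix phi :: "nat \<Rightarrow> int" assume L: "phi \<in> Ldual r" and Z: "\<forall>k>Suc n+1. phi k = 0"
      define a where "a = phi (n + 2)"
      define psi where "psi = (\<lambda>k. phi k - a * Evee IP r (n+1) k)"
      have i: "1 \<le> n + 1" "n + 1 \<le> r" using Suc.prems by auto
      have "psi \<in> Ldual r" using L EvL unfolding Ldual_def psi_def by simp
      moreover have "\<forall>k>n+1. psi k = 0"
      proof (intro allI impI)
        fix k assume "k > n + 1"
        thus "psi k = 0" using Z Ev[OF i, of k] unfolding psi_def a_def
          by (cases "k = n + 2") auto
      qed
      ultimately have "\<exists>c. \<forall>k. 2 \<le> k \<longrightarrow> psi k = (\<Sum>i=1..r. c i * Evee IP r i k)"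
        using Suc.IH Suc.prems by simp
      then obtain c where c: "\<forall>k. 2 \<le> k \<longrightarrow> psi k = (\<Sum>i=1..r. c i * Evee IP r i k)" by blast
      define c' where "c' = (\<lambda>i. c i + (if i = n + 1 then a else 0))"
      have "\<forall>k. 2 \<le> k \<longrightarrow> phi k = (\<Sum>i=1..r. c' i * Evee IP r i k)"
      proof (intro allI impI)
        fix k :: nat assume k: "2 \<le> k"
        have "(\<Sum>i=1..r. c' i * Evee IP r i k) = (\<Sum>i=1..r. c i * Evee IP r i k)
              + (\<Sum>i=1..r. (if i = n + 1 then a * Evee IP r i k else 0))"
          unfolding c'_def sum.distrib[symmetric] by (rule sum.cong) (auto simp: distrib_right)
        also have "\<dots> = psi k + a * Evee IP r (n+1) k" using c k i by simp
        finally show "phi k = (\<Sum>i=1..r. c' i * Evee IP r i k)" unfolding psi_def by simp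
      qed
      thus "\<exists>c. \<forall>k. 2 \<le> k \<longrightarrow> phi k = (\<Sum>i=1..r. c i * Evee IP r i k)" by blast
    qed
  qed
  have sub2: "{phi \<in> Ldual r. numap m r phi = (0, 0)} \<subseteq> Egrp IP r"
  proof
    fix phi assume A: "phi \<in> {phi \<in> Ldual r. numap m r phi = (0, 0)}"
    hence L: "phi \<in> Ldual r" and N: "numap m r phi = (0, 0)" by auto
    have "\<forall>k>r+1. phi k = 0" using L unfolding Ldual_def by simp
    hence "\<exists>c. \<forall>k. 2 \<le> k \<longrightarrow> phi k = (\<Sum>i=1..r. c i * Evee IP r i k)"
      using red[of r] L by simp
    then obtain c where c: "\<forall>k. 2 \<le> k \<longrightarrow> phi k = (\<Sum>i=1..r. c i * Evee IP r i k)" by blast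
    define E where "E = (\<lambda>k. \<Sum>i=1..r. c i * Evee IP r i k)"
    have "E \<in> Egrp IP r" unfolding Egrp_def E_def by blast
    hence NE: "numap m r E = (0, 0)" using sub1 by blast
    define psi where "psi = (\<lambda>k. phi k - E k)"
    have lin: "numap m r psi = (fst (numap m r phi) - fst (numap m r E), snd (numap m r phi) - snd (numap m r E))"
      unfolding numap_def psi_def by (simp add: sum_subtractf left_diff_distrib)
    have "numap m r psi = (psi 1, psi 0)"
      by (rule numap01) (use c in \<open>auto simp: psi_def E_def\<close>)
    hence "psi 1 = 0" "psi 0 = 0" using lin N NE by auto
    hence p01: "phi 1 = E 1" "phi 0 = E 0" unfolding psi_def by auto
    have "phi = E"
    proof
      fix k show "phi k = E k"
      proof (cases "2 \<le> k")
        case True thus ?thesis using c unfolding E_def by simp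
      next
        case False hence "k = 0 \<or> k = 1" by linarith
        thus ?thesis using p01 by auto
      qed
    qed
    thus "phi \<in> Egrp IP r" using \<open>E \<in> Egrp IP r\<close> by simp
  qed
  show ?thesis using surj sub1 sub2 by blast
qed

end
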